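(* Consider the reliable facility location problem described in the context, and define the decision-dependent set $\mathcal U^k(x)=\{u\in\mathbb R^{|I|}_+: \sum_{j\in J}u_j\le k,\ u_j\le x_{d,j}\ \forall j\in J,\ u_i=0\ \forall i\notin J\}$. If $C\ge\max_{i,j}c_{ij}$ and $\theta_i\le 0$ for all $i\in I$, then the problem $\min_{(x_c,x_d)\in\mathcal X}(1-\rho)\sum_{i\in I}\sum_{j\in J}c_{ij}x_{c,ij}+\rho\max_{u\in\mathcal U^0}\min_{(y_1,y_2)\in\mathcal Y(x,u)}\Big(\sum_{i\in I}\sum_{j\in J}c_{ij}y_{1,ij}+\sum_{i\in I}Cy_{2,i}\Big)$ is equivalent to the same problem with $\mathcal U^0$ replaced by $\mathcal U^k(x)$; in particular the two optimal values coincide.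
   Context: $I$ is a finite set of client sites and $J\subseteq I$ the set of potential facility sites; $d_i\ge 0$ is the demand at $i$; $c_{ij}\ge 0$ is the unit cost of serving $i$ from $j$, with $c_{ii}=0$; $A_j$ is the capacity of site $j$; $p$ and $k$ are positive integers; $\rho\in[0,1]$; $C$ is the unit penalty for unmet demand; $\theta_i$ is a demand-change parameter. First stage: $\mathcal X=\{(x_c,x_d)\in\mathbb R^{|I|\times|J|}_+\times\{0,1\}^{|J|}: \sum_{j\in J}x_{d,j}=p,\ \sum_{j\in J}x_{c,ij}\ge d_i\ \forall i\in I,\ \sum_{i\in I}x_{c,ij}\le A_jx_{d,j}\ \forall j\in J\}$. Uncertainty (disruptions): $\mathcal U^0=\{u\in\{0,1\}^{|I|}: \sum_{i\in I}u_i\le k\}$. Recourse: $\mathcal Y(x,u)=\{(y_1,y_2)\in\mathbb R^{|I||J|}_+\times\mathbb R^{|I|}_+: \sum_{j\in J}y_{1,ij}+y_{2,i}\ge(1+\theta_iu_i)d_i\ \forall i\in I,\ \sum_{i\in I}y_{1,ij}\le A_jx_{d,j}\ \forall j\in J,\ \sum_{i\in I}y_{1,ij}\le A_j(1-u_j)\ \forall j\in J\}$. Two formulations are called equivalent if they have the same optimal value and any optimal first-stage solution of one is optimal for the other, and vice versa. *)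

theory Defs
  imports Complex_Main
begin

text \<open>Vectors indexed by I or I\<times>J are functions; only their values
on the index sets matter.\<close>

definition first_stage ::
  "'a set \<Rightarrow> 'a set \<Rightarrow> ('a \<Rightarrow> real) \<Rightarrow> ('a \<Rightarrow> real) \<Rightarrow> nat
   \<Rightarrow> (('a \<Rightarrow> 'a \<Rightarrow> real) \<times> ('a \<Rightarrow> real)) set" where
  "first_stage I J d A p = {(xc, xd).
      (\<forall>i\<in>I. \<forall>j\<in>J. xc i j \<ge> 0) \<and> (\<forall>j\<in>J. xd j \<in> {0, 1}) \<and>
      (\<Sum>j\<in>J. xd j) = real p \<and>
      (\<forall>i\<in>I. (\<Sum>j\<in>J. xc i j) \<ge> d i) \<and>
      (\<forall>j\<in>J. (\<Sum>i\<in>I. xc i j) \<le> A j * xd j)}"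

definition U0 :: "'a set \<Rightarrow> nat \<Rightarrow> ('a \<Rightarrow> real) set" where
  "U0 I k = {u. (\<forall>i\<in>I. u i \<in> {0, 1}) \<and> (\<forall>i. i \<notin> I \<longrightarrow> u i = 0) \<and>
                (\<Sum>i\<in>I. u i) \<le> real k}"

definition Uk :: "'a set \<Rightarrow> 'a set \<Rightarrow> nat \<Rightarrow> ('a \<Rightarrow> real) \<Rightarrow> ('a \<Rightarrow> real) set" where
  "Uk I J k xd = {u. (\<forall>i\<in>I. u i \<ge> 0) \<and> (\<forall>i. i \<notin> I \<longrightarrow> u i = 0) \<and>
                   (\<Sum>j\<in>J. u j) \<le> real k \<and> (\<forall>j\<in>J. u j \<le> xd j) \<and>
                   (\<forall>i\<in>I. i \<notin> J \<longrightarrow> u i = 0)}"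

definition recourse ::
  "'a set \<Rightarrow> 'a set \<Rightarrow> ('a \<Rightarrow> real) \<Rightarrow> ('a \<Rightarrow> real) \<Rightarrow> ('a \<Rightarrow> real)
   \<Rightarrow> ('a \<Rightarrow> real) \<Rightarrow> ('a \<Rightarrow> real) \<Rightarrow> (('a \<Rightarrow> 'a \<Rightarrow> real) \<times> ('a \<Rightarrow> real)) set" where
  "recourse I J d A \<theta> xd u = {(y1, y2).
      (\<forall>i\<in>I. \<forall>j\<in>J. y1 i j \<ge> 0) \<and> (\<forall>i\<in>I. y2 i \<ge> 0) \<and>
      (\<forall>i\<in>I. (\<Sum>j\<in>J. y1 i j) + y2 i \<ge> (1 + \<theta> i * u i) * d i) \<and>
      (\<forall>j\<in>J. (\<Sum>i\<in>I. y1 i j) \<le> A j * xd j) \<and>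
      (\<forall>j\<in>J. (\<Sum>i\<in>I. y1 i j) \<le> A j * (1 - u j))}"

definition recourse_cost ::
  "'a set \<Rightarrow> 'a set \<Rightarrow> ('a \<Rightarrow> 'a \<Rightarrow> real) \<Rightarrow> real
   \<Rightarrow> ('a \<Rightarrow> 'a \<Rightarrow> real) \<times> ('a \<Rightarrow> real) \<Rightarrow> real" where
  "recourse_cost I J c C y = (\<Sum>i\<in>I. \<Sum>j\<in>J. c i j * fst y i j) + (\<Sum>i\<in>I. C * snd y i)"

definition robust_obj ::
  "'a set \<Rightarrow> 'a set \<Rightarrow> ('a \<Rightarrow> real) \<Rightarrow> ('a \<Rightarrow> 'a \<Rightarrow> real) \<Rightarrow> ('a \<Rightarrow> real) \<Rightarrow> real
   \<Rightarrow> real \<Rightarrow> ('a \<Rightarrow> real)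
   \<Rightarrow> (('a \<Rightarrow> 'a \<Rightarrow> real) \<times> ('a \<Rightarrow> real) \<Rightarrow> ('a \<Rightarrow> real) set)
   \<Rightarrow> ('a \<Rightarrow> 'a \<Rightarrow> real) \<times> ('a \<Rightarrow> real) \<Rightarrow> real" where
  "robust_obj I J d c A \<rho> C \<theta> U x =
     (1 - \<rho>) * (\<Sum>i\<in>I. \<Sum>j\<in>J. c i j * fst x i j) +
     \<rho> * (SUP u\<in>U x. INF y\<in>recourse I J d A \<theta> (snd x) u. recourse_cost I J c C y)"

definition equivalent_problems :: "'b set \<Rightarrow> ('b \<Rightarrow> real) \<Rightarrow> ('b \<Rightarrow> real) \<Rightarrow> bool" where
  "equivalent_problems X f g \<longleftrightarrow>
     (INF x\<in>X. f x) = (INF x\<in>X. g x) \<and>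
     (\<forall>x\<in>X. (\<forall>x'\<in>X. f x \<le> f x') \<longleftrightarrow> (\<forall>x'\<in>X. g x \<le> g x'))"

end

theory Submission
  imports Defs
begin

locale rfl_setup =
  fixes I J :: "'a set" and d A \<theta> xd :: "'a \<Rightarrow> real" and c :: "'a \<Rightarrow> 'a \<Rightarrow> real"
    and C :: real and k :: nat
  assumes finI: "finite I" and JI: "J \<subseteq> I"
    and dnn: "\<forall>i\<in>I. d i \<ge> 0" and Ann: "\<forall>j\<in>J. A j \<ge> 0"
    and cnn: "\<forall>i\<in>I. \<forall>j\<in>J. c i j \<ge> 0"
    and cC: "\<forall>i\<in>I. \<forall>j\<in>J. c i j \<le> C"
    and thn: "\<forall>i\<in>I. \<theta> i \<le> 0"
    and xdb: "\<forall>j\<in>J. xd j \<in> {0, 1}"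
    and Jne: "J \<noteq> {}"
begin

definition Q where "Q u = (INF y\<in>recourse I J d A \<theta> xd u. recourse_cost I J c C y)"

definition D where "D = {u. \<forall>i\<in>I. 0 \<le> u i \<and> u i \<le> 1}"

lemma finJ: "finite J" using finI JI finite_subset by blast

lemma Cnn: "0 \<le> C"
proof -
  obtain j where "j \<in> J" using Jne by blast
  then have "j \<in> I" using JI by blast
  then show ?thesis using cnn cC \<open>j \<in> J\<close> by force
qed

lemma cost_nonneg:
  assumes "y \<in> recourse I J d A \<theta> xd u"
  shows "0 \<le> recourse_cost I J c C y"
proof -
  obtain y1 y2 where y: "y = (y1, y2)" by force
  have a: "\<forall>i\<in>I. \<forall>j\<in>J. y1 i j \<ge> 0" "\<forall>i\<in>I. y2 i \<ge> 0"
    using assms y unfolding recourse_def by auto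
  have "0 \<le> (\<Sum>i\<in>I. \<Sum>j\<in>J. c i j * y1 i j)"
    using a cnn by (intro sum_nonneg mult_nonneg_nonneg) auto
  moreover have "0 \<le> (\<Sum>i\<in>I. C * y2 i)"
    using a Cnn by (intro sum_nonneg mult_nonneg_nonneg) auto
  ultimately show ?thesis unfolding recourse_cost_def y by simp
qed

lemma bdd: "bdd_below ((recourse_cost I J c C) ` recourse I J d A \<theta> xd u)"
  by (rule bdd_belowI2[where m=0]) (rule cost_nonneg)

lemma Q_le: "y \<in> recourse I J d A \<theta> xd u \<Longrightarrow> Q u \<le> recourse_cost I J c C y"
  unfolding Q_def using bdd by (rule cINF_lower)

lemma zero_rec:
  assumes "u \<in> D"
  shows "((\<lambda>i j. 0), d) \<in> recourse I J d A \<theta> xd u"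
proof -
  have "\<forall>i\<in>I. (1 + \<theta> i * u i) * d i \<le> d i"
  proof
    fix i assume "i \<in> I"
    then have "\<theta> i * u i \<le> 0" "d i \<ge> 0" using assms thn dnn unfolding D_def
      by (auto simp: mult_nonpos_nonneg)
    then have "\<theta> i * u i * d i \<le> 0" by (simp add: mult_nonpos_nonneg)
    then show "(1 + \<theta> i * u i) * d i \<le> d i" by (simp add: algebra_simps)
  qed
  moreover have "\<forall>j\<in>J. 0 \<le> A j * xd j" using Ann xdb by auto
  moreover have "\<forall>j\<in>J. 0 \<le> A j * (1 - u j)" using Ann assms JI unfolding D_def by auto
  ultimately show ?thesis using dnn unfolding recourse_def by auto
qed

lemma rec_ne: "u \<in> D \<Longrightarrow> recourse I J d A \<theta> xd u \<noteq> {}"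
  using zero_rec by blast

lemma Q_upper: "u \<in> D \<Longrightarrow> Q u \<le> recourse_cost I J c C ((\<lambda>i j. 0), d)"
  using zero_rec Q_le by blast

lemma Q_convex:
  assumes u: "u \<in> D" and v: "v \<in> D" and t: "0 \<le> t" "t \<le> 1"
  shows "Q (\<lambda>i. t * u i + (1 - t) * v i) \<le> t * Q u + (1 - t) * Q v"
proof (rule field_le_epsilon)
  fix e :: real assume e: "0 < e"
  have "Q u < Q u + e" using e by simp
  then obtain y where y: "y \<in> recourse I J d A \<theta> xd u" "recourse_cost I J c C y < Q u + e"
    using cINF_less_iff[OF rec_ne[OF u] bdd] unfolding Q_def by blast
  have "Q v < Q v + e" using e by simp
  then obtain z where z: "z \<in> recourse I J d A \<theta> xd v" "recourse_cost I J c C z < Q v + e"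
    using cINF_less_iff[OF rec_ne[OF v] bdd] unfolding Q_def by blast
  obtain y1 y2 where yy: "y = (y1, y2)" by force
  obtain z1 z2 where zz: "z = (z1, z2)" by force
  define w where "w = ((\<lambda>i j. t * y1 i j + (1 - t) * z1 i j), (\<lambda>i. t * y2 i + (1 - t) * z2 i))"
  define m where "m = (\<lambda>i. t * u i + (1 - t) * v i)"
  have ya: "\<forall>i\<in>I. \<forall>j\<in>J. y1 i j \<ge> 0" "\<forall>i\<in>I. y2 i \<ge> 0"
      "\<forall>i\<in>I. (\<Sum>j\<in>J. y1 i j) + y2 i \<ge> (1 + \<theta> i * u i) * d i"
      "\<forall>j\<in>J. (\<Sum>i\<in>I. y1 i j) \<le> A j * xd j"
      "\<forall>j\<in>J. (\<Sum>i\<in>I. y1 i j) \<le> A j * (1 - u j)"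
    using y(1) unfolding yy recourse_def by auto
  have za: "\<forall>i\<in>I. \<forall>j\<in>J. z1 i j \<ge> 0" "\<forall>i\<in>I. z2 i \<ge> 0"
      "\<forall>i\<in>I. (\<Sum>j\<in>J. z1 i j) + z2 i \<ge> (1 + \<theta> i * v i) * d i"
      "\<forall>j\<in>J. (\<Sum>i\<in>I. z1 i j) \<le> A j * xd j"
      "\<forall>j\<in>J. (\<Sum>i\<in>I. z1 i j) \<le> A j * (1 - v j)"
    using z(1) unfolding zz recourse_def by auto
  have t1: "0 \<le> 1 - t" using t by simp
  have w_rec: "w \<in> recourse I J d A \<theta> xd m"
    unfolding recourse_def w_def
  proof (clarify, intro conjI ballI)
    fix i j assume "i \<in> I" "j \<in> J"
    then show "0 \<le> t * y1 i j + (1 - t) * z1 i j" using ya za t t1 by simp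
  next
    fix i assume "i \<in> I"
    then show "0 \<le> t * y2 i + (1 - t) * z2 i" using ya za t t1 by simp
  next
    fix i assume i: "i \<in> I"
    have "(\<Sum>j\<in>J. t * y1 i j + (1 - t) * z1 i j) + (t * y2 i + (1 - t) * z2 i)
        = t * ((\<Sum>j\<in>J. y1 i j) + y2 i) + (1 - t) * ((\<Sum>j\<in>J. z1 i j) + z2 i)"
      by (simp add: sum.distrib flip: sum_distrib_left) (simp add: algebra_simps)
    also have "\<dots> \<ge> t * ((1 + \<theta> i * u i) * d i) + (1 - t) * ((1 + \<theta> i * v i) * d i)"
      using ya(3) za(3) i t t1 by (intro add_mono mult_left_mono) auto
    moreover have "t * ((1 + \<theta> i * u i) * d i) + (1 - t) * ((1 + \<theta> i * v i) * d i)
        = (1 + \<theta> i * m i) * d i" unfolding m_def by (simp add: algebra_simps)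
    ultimately show "(1 + \<theta> i * m i) * d i \<le> (\<Sum>j\<in>J. t * y1 i j + (1 - t) * z1 i j) + (t * y2 i + (1 - t) * z2 i)"
      by linarith
  next
    fix j assume j: "j \<in> J"
    have "(\<Sum>i\<in>I. t * y1 i j + (1 - t) * z1 i j) = t * (\<Sum>i\<in>I. y1 i j) + (1 - t) * (\<Sum>i\<in>I. z1 i j)"
      by (simp add: sum.distrib sum_distrib_left)
    also have "\<dots> \<le> t * (A j * xd j) + (1 - t) * (A j * xd j)"
      using ya(4) za(4) j t t1 by (intro add_mono mult_left_mono) auto
    finally show "(\<Sum>i\<in>I. t * y1 i j + (1 - t) * z1 i j) \<le> A j * xd j" by (simp add: algebra_simps)
  next
    fix j assume j: "j \<in> J"
    have "(\<Sum>i\<in>I. t * y1 i j + (1 - t) * z1 i j) = t * (\<Sum>i\<in>I. y1 i j) + (1 - t) * (\<Sum>i\<in>I. z1 i j)"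
      by (simp add: sum.distrib sum_distrib_left)
    also have "\<dots> \<le> t * (A j * (1 - u j)) + (1 - t) * (A j * (1 - v j))"
      using ya(5) za(5) j t t1 by (intro add_mono mult_left_mono) auto
    also have "\<dots> = A j * (1 - m j)" unfolding m_def by (simp add: algebra_simps)
    finally show "(\<Sum>i\<in>I. t * y1 i j + (1 - t) * z1 i j) \<le> A j * (1 - m j)" .
  qed
  have "recourse_cost I J c C w = t * recourse_cost I J c C y + (1 - t) * recourse_cost I J c C z"
    unfolding recourse_cost_def w_def yy zz
    by (simp add: distrib_left mult.left_commute sum.distrib flip: sum_distrib_left)
  also have "\<dots> \<le> t * (Q u + e) + (1 - t) * (Q v + e)"
    using y(2) z(2) t t1 by (intro add_mono mult_left_mono) auto
  also have "\<dots> = t * Q u + (1 - t) * Q v + e" by (simp add: algebra_simps)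
  finally have "recourse_cost I J c C w \<le> t * Q u + (1 - t) * Q v + e" .
  moreover have "Q m \<le> recourse_cost I J c C w" using Q_le[OF w_rec] .
  ultimately show "Q (\<lambda>i. t * u i + (1 - t) * v i) \<le> t * Q u + (1 - t) * Q v + e"
    unfolding m_def by linarith
qed

lemma Q_max:
  assumes u: "u \<in> D" and v: "v \<in> D" and t: "0 \<le> t" "t \<le> 1"
  shows "Q (\<lambda>i. t * u i + (1 - t) * v i) \<le> max (Q u) (Q v)"
proof -
  have "t * Q u + (1 - t) * Q v \<le> t * max (Q u) (Q v) + (1 - t) * max (Q u) (Q v)"
    using t by (intro add_mono mult_left_mono) auto
  then show ?thesis using Q_convex[OF assms] by (simp add: algebra_simps)
qed


lemma U0_D: "U0 I k \<subseteq> D" unfolding U0_def D_def by auto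

lemma Uk_D: "Uk I J k xd \<subseteq> D"
proof
  fix u assume u: "u \<in> Uk I J k xd"
  show "u \<in> D" unfolding D_def
  proof (clarify, intro conjI)
    fix i assume i: "i \<in> I"
    show "0 \<le> u i" using u i unfolding Uk_def by auto
    show "u i \<le> 1"
    proof (cases "i \<in> J")
      case True then show ?thesis using u xdb unfolding Uk_def by force
    next
      case False then show ?thesis using u i unfolding Uk_def by auto
    qed
  qed
qed

lemma Q_anti:
  assumes "v \<in> D" "recourse I J d A \<theta> xd v \<subseteq> recourse I J d A \<theta> xd u"
  shows "Q u \<le> Q v"
  unfolding Q_def
  by (rule cINF_greatest[OF rec_ne[OF assms(1)]]) (use assms(2) Q_le in \<open>auto simp: Q_def\<close>)

lemma U0_to_Uk:
  assumes u: "u \<in> U0 I k"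
  shows "\<exists>v\<in>Uk I J k xd. Q u \<le> Q v"
proof -
  define v where "v = (\<lambda>i. if i \<in> J then u i * xd i else 0)"
  have ub: "\<forall>i\<in>I. u i \<in> {0,1}" "\<forall>i. i \<notin> I \<longrightarrow> u i = 0" "(\<Sum>i\<in>I. u i) \<le> real k"
    using u unfolding U0_def by auto
  have vle: "\<forall>i\<in>I. 0 \<le> v i \<and> v i \<le> u i"
    using ub(1) xdb unfolding v_def by fastforce
  have "(\<Sum>j\<in>J. v j) \<le> (\<Sum>j\<in>J. u j)" using vle JI by (intro sum_mono) auto
  also have "\<dots> \<le> (\<Sum>i\<in>I. u i)" using JI finI ub(1)
    by (intro sum_mono2) auto
  finally have vs: "(\<Sum>j\<in>J. v j) \<le> real k" using ub(3) by linarith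
  have vx: "\<forall>j\<in>J. v j \<le> xd j" using ub(1) xdb JI unfolding v_def by fastforce
  have vU: "v \<in> Uk I J k xd" unfolding Uk_def
    using vx vle vs JI ub(1) xdb by (auto simp: v_def)
  have "recourse I J d A \<theta> xd v \<subseteq> recourse I J d A \<theta> xd u"
  proof
    fix y assume y: "y \<in> recourse I J d A \<theta> xd v"
    obtain y1 y2 where yy: "y = (y1, y2)" by force
    have ya: "\<forall>i\<in>I. \<forall>j\<in>J. y1 i j \<ge> 0" "\<forall>i\<in>I. y2 i \<ge> 0"
      "\<forall>i\<in>I. (\<Sum>j\<in>J. y1 i j) + y2 i \<ge> (1 + \<theta> i * v i) * d i"
      "\<forall>j\<in>J. (\<Sum>i\<in>I. y1 i j) \<le> A j * xd j"
      "\<forall>j\<in>J. (\<Sum>i\<in>I. y1 i j) \<le> A j * (1 - v j)"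
      using y unfolding yy recourse_def by auto
    have dem: "\<forall>i\<in>I. (\<Sum>j\<in>J. y1 i j) + y2 i \<ge> (1 + \<theta> i * u i) * d i"
    proof
      fix i assume i: "i \<in> I"
      have "\<theta> i * u i \<le> \<theta> i * v i" using vle thn i by (simp add: mult_left_mono_neg)
      then have "(1 + \<theta> i * u i) * d i \<le> (1 + \<theta> i * v i) * d i"
        using dnn i by (intro mult_right_mono) auto
      then show "(\<Sum>j\<in>J. y1 i j) + y2 i \<ge> (1 + \<theta> i * u i) * d i" using ya(3) i by force
    qed
    have cap: "\<forall>j\<in>J. (\<Sum>i\<in>I. y1 i j) \<le> A j * (1 - u j)"
    proof
      fix j assume j: "j \<in> J"
      show "(\<Sum>i\<in>I. y1 i j) \<le> A j * (1 - u j)"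
      proof (cases "xd j = 1")
        case True then show ?thesis using ya(5) j by (force simp: v_def)
      next
        case False then have "xd j = 0" using xdb j by auto
        moreover have "0 \<le> A j * (1 - u j)" using Ann ub(1) j JI by fastforce
        ultimately show ?thesis using ya(4) j by force
      qed
    qed
    show "y \<in> recourse I J d A \<theta> xd u" unfolding yy recourse_def using ya dem cap by auto
  qed
  then show ?thesis using vU Q_anti Uk_D by blast
qed


definition Fr where "Fr u = {j\<in>J. u j \<noteq> 0 \<and> u j \<noteq> 1}"

lemma Fr_fin: "finite (Fr u)" unfolding Fr_def using finJ by auto

lemma Fr_props:
  assumes u: "u \<in> Uk I J k xd" and a: "a \<in> Fr u"
  shows "0 < u a" "u a < 1" "xd a = 1" "a \<in> J" "a \<in> I"
proof -
  have aJ: "a \<in> J" "u a \<noteq> 0" "u a \<noteq> 1" using a unfolding Fr_def by auto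
  have "0 \<le> u a" "u a \<le> xd a" using u aJ JI unfolding Uk_def by auto
  moreover have "xd a \<in> {0,1}" using xdb aJ by auto
  ultimately show "0 < u a" "u a < 1" "xd a = 1" using aJ by auto
  show "a \<in> J" "a \<in> I" using aJ JI by auto
qed

lemma bin_U0:
  assumes u: "u \<in> Uk I J k xd" and F: "Fr u = {}"
  shows "u \<in> U0 I k"
proof -
  have ub: "\<forall>i\<in>I. u i \<ge> 0" "\<forall>i. i \<notin> I \<longrightarrow> u i = 0" "(\<Sum>j\<in>J. u j) \<le> real k"
     "\<forall>i\<in>I. i \<notin> J \<longrightarrow> u i = 0"
    using u unfolding Uk_def by auto
  have "(\<Sum>i\<in>I. u i) = (\<Sum>j\<in>J. u j)"
    using ub(4) finI JI by (intro sum.mono_neutral_right) auto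
  moreover have "\<forall>i\<in>I. u i \<in> {0,1}" using F ub(4) unfolding Fr_def by auto
  ultimately show ?thesis unfolding U0_def using ub by auto
qed

lemma rounding:
  assumes "u \<in> Uk I J k xd"
  shows "\<exists>v\<in>U0 I k. Q u \<le> Q v"
  using assms
proof (induction "card (Fr u)" arbitrary: u rule: less_induct)
  case less
  note u = less.prems
  have comb: "\<exists>v\<in>U0 I k. Q u \<le> Q v"
    if P: "P \<in> Uk I J k xd" and M: "M \<in> Uk I J k xd" and PF: "Fr P \<subset> Fr u" and MF: "Fr M \<subset> Fr u"
      and t: "0 \<le> t" "t \<le> 1" and ue: "u = (\<lambda>i. t * P i + (1 - t) * M i)" for P M t
  proof -
    obtain v1 where v1: "v1 \<in> U0 I k" "Q P \<le> Q v1"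
      using less.hyps[OF psubset_card_mono[OF Fr_fin PF] P] by blast
    obtain v2 where v2: "v2 \<in> U0 I k" "Q M \<le> Q v2"
      using less.hyps[OF psubset_card_mono[OF Fr_fin MF] M] by blast
    have "Q u \<le> max (Q P) (Q M)" unfolding ue using Q_max P M Uk_D t by blast
    then show ?thesis using v1 v2 by (cases "Q P \<le> Q M") (auto intro: order_trans)
  qed
  have ub: "\<forall>i\<in>I. u i \<ge> 0" "\<forall>i. i \<notin> I \<longrightarrow> u i = 0" "(\<Sum>j\<in>J. u j) \<le> real k"
     "\<forall>j\<in>J. u j \<le> xd j" "\<forall>i\<in>I. i \<notin> J \<longrightarrow> u i = 0"
    using u unfolding Uk_def by auto
  show ?case
  proof (cases "Fr u = {}")
    case True then show ?thesis using bin_U0[OF u] by blast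
  next
    case False
    then obtain a where a: "a \<in> Fr u" by blast
    note pa = Fr_props[OF u a]
    show ?thesis
    proof (cases "\<exists>b\<in>Fr u. b \<noteq> a")
      case True
      then obtain b where b: "b \<in> Fr u" "b \<noteq> a" by blast
      note pb = Fr_props[OF u b(1)]
      define s1 where "s1 = min (1 - u a) (u b)"
      define s2 where "s2 = min (u a) (1 - u b)"
      define \<delta> where "\<delta> = (\<lambda>j. (if j = a then 1 else 0) - (if j = b then 1 else (0::real)))"
      define P where "P = (\<lambda>j. u j + s1 * \<delta> j)"
      define M where "M = (\<lambda>j. u j - s2 * \<delta> j)"
      have s1p: "0 < s1" and s2p: "0 < s2" using pa pb unfolding s1_def s2_def by auto
      have ds: "(\<Sum>j\<in>J. \<delta> j) = 0"
        unfolding \<delta>_def using pa pb finJ by (simp add: sum_subtractf)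
      have \<delta>a: "\<delta> a = 1" and \<delta>b: "\<delta> b = -1" and \<delta>o: "\<And>j. j \<noteq> a \<Longrightarrow> j \<noteq> b \<Longrightarrow> \<delta> j = 0"
        using b(2) unfolding \<delta>_def by auto
      have PU: "P \<in> Uk I J k xd" unfolding Uk_def
      proof (clarify, intro conjI allI impI ballI)
        fix i assume "i \<in> I" then show "0 \<le> P i"
          using ub(1) \<delta>a \<delta>b \<delta>o pa pb unfolding P_def s1_def
          by (cases "i = a"; cases "i = b") auto
      next
        fix i assume "i \<notin> I" then show "P i = 0"
          using ub(2) \<delta>o pa pb unfolding P_def by (metis mult_zero_right add_0_right)
      next
        show "(\<Sum>j\<in>J. P j) \<le> real k"
          unfolding P_def using ub(3) ds by (simp add: sum.distrib flip: sum_distrib_left)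
      next
        fix j assume "j \<in> J" then show "P j \<le> xd j"
          using ub(4) \<delta>a \<delta>b \<delta>o pa pb unfolding P_def s1_def
          by (cases "j = a"; cases "j = b") auto
      next
        fix i assume "i \<in> I" "i \<notin> J" then show "P i = 0"
          using ub(5) \<delta>o pa pb unfolding P_def by (metis mult_zero_right add_0_right)
      qed
      have MU: "M \<in> Uk I J k xd" unfolding Uk_def
      proof (clarify, intro conjI allI impI ballI)
        fix i assume "i \<in> I" then show "0 \<le> M i"
          using ub(1) \<delta>a \<delta>b \<delta>o pa pb unfolding M_def s2_def
          by (cases "i = a"; cases "i = b") auto
      next
        fix i assume "i \<notin> I" then show "M i = 0"
          using ub(2) \<delta>o pa pb unfolding M_def by (metis mult_zero_right diff_0_right)
      next
        show "(\<Sum>j\<in>J. M j) \<le> real k"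
          unfolding M_def using ub(3) ds by (simp add: sum_subtractf flip: sum_distrib_left)
      next
        fix j assume "j \<in> J" then show "M j \<le> xd j"
          using ub(4) \<delta>a \<delta>b \<delta>o pa pb unfolding M_def s2_def
          by (cases "j = a"; cases "j = b") auto
      next
        fix i assume "i \<in> I" "i \<notin> J" then show "M i = 0"
          using ub(5) \<delta>o pa pb unfolding M_def by (metis mult_zero_right diff_0_right)
      qed
      have PF: "Fr P \<subset> Fr u"
      proof -
        have "Fr P \<subseteq> Fr u"
        proof
          fix x assume x: "x \<in> Fr P"
          show "x \<in> Fr u"
          proof (cases "x = a \<or> x = b")
            case True then show ?thesis using a b by auto
          next
            case False then have "P x = u x" using \<delta>o unfolding P_def by auto
            then show ?thesis using x unfolding Fr_def by auto
          qed
        qed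
        moreover have "a \<notin> Fr P \<or> b \<notin> Fr P"
          unfolding Fr_def P_def s1_def using \<delta>a \<delta>b by (cases "1 - u a \<le> u b") auto
        ultimately show ?thesis using a b by blast
      qed
      have MF: "Fr M \<subset> Fr u"
      proof -
        have "Fr M \<subseteq> Fr u"
        proof
          fix x assume x: "x \<in> Fr M"
          show "x \<in> Fr u"
          proof (cases "x = a \<or> x = b")
            case True then show ?thesis using a b by auto
          next
            case False then have "M x = u x" using \<delta>o unfolding M_def by auto
            then show ?thesis using x unfolding Fr_def by auto
          qed
        qed
        moreover have "a \<notin> Fr M \<or> b \<notin> Fr M"
          unfolding Fr_def M_def s2_def using \<delta>a \<delta>b by (cases "u a \<le> 1 - u b") auto
        ultimately show ?thesis using a b by blast
      qed
      define t where "t = s2 / (s1 + s2)"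
      have t: "0 \<le> t" "t \<le> 1" unfolding t_def using s1p s2p by auto
      have "1 - t = s1 / (s1 + s2)" unfolding t_def using s1p s2p by (simp add: field_simps)
      then have e0: "t * s1 - (1 - t) * s2 = 0" unfolding t_def using s1p s2p by (simp add: field_simps)
      have ue: "u = (\<lambda>i. t * P i + (1 - t) * M i)"
      proof
        fix i
        have "t * P i + (1 - t) * M i = u i + (t * s1 - (1 - t) * s2) * \<delta> i"
          unfolding P_def M_def by (simp add: algebra_simps)
        then show "u i = t * P i + (1 - t) * M i" using e0 by simp
      qed
      show ?thesis using comb[OF PU MU PF MF t ue] .
    next
      case False
      then have Fa: "Fr u = {a}" using a by blast
      define P where "P = u(a := 1)"
      define M where "M = u(a := 0)"
      have Jb: "\<forall>j\<in>J - {a}. u j \<in> {0,1}" using Fa unfolding Fr_def by auto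
      have "(\<Sum>j\<in>J - {a}. u j) = (\<Sum>j\<in>J - {a}. if u j = 1 then 1 else 0)"
        using Jb by (intro sum.cong) auto
      also have "\<dots> = real (card {j\<in>J - {a}. u j = 1})"
        by (simp add: sum.If_cases finJ Int_def)
      finally have sn: "(\<Sum>j\<in>J - {a}. u j) = real (card {j\<in>J - {a}. u j = 1})" .
      have su: "(\<Sum>j\<in>J. u j) = u a + (\<Sum>j\<in>J - {a}. u j)"
        using sum.remove[OF finJ pa(4)] .
      have "real (card {j\<in>J - {a}. u j = 1}) < real k" using su sn ub(3) pa(1) by linarith
      then have "card {j\<in>J - {a}. u j = 1} + 1 \<le> k" by linarith
      then have "real (card {j\<in>J - {a}. u j = 1}) + 1 \<le> real k" by (metis of_nat_1 of_nat_add of_nat_le_iff)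
      moreover have "(\<Sum>j\<in>J. P j) = 1 + (\<Sum>j\<in>J - {a}. u j)"
        unfolding P_def using sum.remove[OF finJ pa(4), of "u(a:=1)"] by simp
      ultimately have sP: "(\<Sum>j\<in>J. P j) \<le> real k" using sn by linarith
      have sM: "(\<Sum>j\<in>J. M j) \<le> real k"
        unfolding M_def using sum.remove[OF finJ pa(4), of "u(a:=0)"] su ub(3) pa(1) by simp
      have PU: "P \<in> Uk I J k xd" unfolding Uk_def P_def using ub pa sP by (auto simp: P_def)
      have MU: "M \<in> Uk I J k xd" unfolding Uk_def M_def using ub pa sM by (auto simp: M_def)
      have PF: "Fr P \<subset> Fr u" using Fa unfolding Fr_def P_def by auto
      have MF: "Fr M \<subset> Fr u" using Fa unfolding Fr_def M_def by auto
      have t: "0 \<le> u a" "u a \<le> 1" using pa by auto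
      have ue: "u = (\<lambda>i. u a * P i + (1 - u a) * M i)"
        unfolding P_def M_def by (auto simp: algebra_simps)
      show ?thesis using comb[OF PU MU PF MF t ue] .
    qed
  qed
qed


lemma SUP_eq: "(SUP u\<in>U0 I k. Q u) = (SUP u\<in>Uk I J k xd. Q u)"
proof -
  have z0: "(\<lambda>_. 0) \<in> U0 I k" unfolding U0_def by auto
  have zk: "(\<lambda>_. 0) \<in> Uk I J k xd" unfolding Uk_def using xdb by auto
  have b0: "bdd_above (Q ` U0 I k)"
    by (rule bdd_aboveI2[where M="recourse_cost I J c C ((\<lambda>i j. 0), d)"]) (use Q_upper U0_D in blast)
  have bk: "bdd_above (Q ` Uk I J k xd)"
    by (rule bdd_aboveI2[where M="recourse_cost I J c C ((\<lambda>i j. 0), d)"]) (use Q_upper Uk_D in blast)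
  have "(SUP u\<in>U0 I k. Q u) \<le> (SUP u\<in>Uk I J k xd. Q u)"
    using z0 bk U0_to_Uk by (intro cSUP_mono) auto
  moreover have "(SUP u\<in>Uk I J k xd. Q u) \<le> (SUP u\<in>U0 I k. Q u)"
    using zk b0 rounding by (intro cSUP_mono) auto
  ultimately show ?thesis by linarith
qed

end

theorem corollary13:
  fixes I J :: "'a set" and d A \<theta> :: "'a \<Rightarrow> real" and c :: "'a \<Rightarrow> 'a \<Rightarrow> real"
    and p k :: nat and \<rho> C :: real
  assumes "finite I" and "J \<subseteq> I"
    and "\<forall>i\<in>I. d i \<ge> 0" and "\<forall>j\<in>J. A j \<ge> 0"
    and "\<forall>i\<in>I. \<forall>j\<in>J. c i j \<ge> 0"
    and "\<forall>i\<in>J. c i i = 0"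
    and "p > 0" and "k > 0"
    and "0 \<le> \<rho>" and "\<rho> \<le> 1"
    and "\<forall>i\<in>I. \<forall>j\<in>J. c i j \<le> C"
    and "\<forall>i\<in>I. \<theta> i \<le> 0"
  shows "equivalent_problems (first_stage I J d A p)
           (robust_obj I J d c A \<rho> C \<theta> (\<lambda>x. U0 I k))
           (robust_obj I J d c A \<rho> C \<theta> (\<lambda>x. Uk I J k (snd x)))"
proof -
  have eq: "robust_obj I J d c A \<rho> C \<theta> (\<lambda>x. U0 I k) x = robust_obj I J d c A \<rho> C \<theta> (\<lambda>x. Uk I J k (snd x)) x"
    if x: "x \<in> first_stage I J d A p" for x
  proof -
    obtain xc xd where xx: "x = (xc, xd)" by force
    have xb: "\<forall>j\<in>J. xd j \<in> {0, 1}" "(\<Sum>j\<in>J. xd j) = real p"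
      using x unfolding xx first_stage_def by auto
    have "J \<noteq> {}" using xb(2) assms(7) by auto
    then interpret r: rfl_setup I J d A \<theta> xd c C k
      using assms xb(1) by unfold_locales auto
    show ?thesis unfolding robust_obj_def xx snd_conv using r.SUP_eq[unfolded r.Q_def] by simp
  qed
  show ?thesis unfolding equivalent_problems_def
    using eq by (auto intro: image_cong)
qed

end
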